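(* Let $a>0$, $\beta>0$, let $\lambda$ be feasible, let $0<\xi<a$, let $\rho\in\mathcal{P}$, and suppose $d_0\ge\tau(\beta)a$. Then $\lim_{\delta\to0^+}T_4=0$, where \[ T_4=9C_5\,\delta^{-1/2}(2\delta+\lambda\delta^{\beta})^{-3/2}(\lambda^2\delta^{2\beta}+4)\int_{k_0(\delta)}^{\infty}\mathrm{e}^{-2k(d_0-\frac32a)}\mathrm{e}^{-4ka}\left(\frac{\mathrm{e}^{2k\xi}-1}{k}\right)\mathrm{d}k,\qquad C_5=\frac{(d_1-d_0)\|\rho\|^2_{L^2(\mathcal{M})}}{9\pi}. \]
   Context: For $0<\delta<1$ and constants $\beta>0$, $\lambda\in\mathbb{R}$, put $\mu=\delta+\lambda\delta^{\beta}$. The constant $\lambda$ is feasible if $\lambda>0$ when $0<\beta<1$, $\lambda\ge-1$ when $\beta=1$, $\lambda\ne0$ when $\beta>1$; $\delta_\mu\in(0,1)$ is a number with $\mu\ge0$ for $0<\delta\le\delta_\mu$. $k_0(\delta)=\frac{1}{2a}\ln\left(\frac{1}{2\delta^2+\lambda\delta^{\beta+1}}\right)$, and $\delta$ ranges over $0<\delta\le\delta_0$, where $0<\delta_0\le\delta_\mu$ is such that $k_0(\delta)>0$ for $0<\delta\le\delta_0$. $\tau(\beta)=\frac{\beta+2}{\beta+1}$ for $0<\beta<1$ and $\tau(\beta)=\frac32$ for $\beta\ge1$. Let $\mathcal{M}=\{(x,y):x>a\}$; $\mathcal{P}$ is the set of real-valued $\rho\in L^2(\mathcal{M})\cap L^\infty(\mathcal{M})$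 with compact support in $\mathcal{M}$, $0<|\operatorname{supp}\rho|<\infty$, and $\int\!\!\int\rho=0$; $d_0=\min\{x:(x,y)\in\operatorname{supp}\rho\}$, $d_1=\max\{x:(x,y)\in\operatorname{supp}\rho\}$. *)

theory Defs
  imports "HOL-Analysis.Analysis"
begin

definition feasible :: "real \<Rightarrow> real \<Rightarrow> bool" where
  "feasible \<beta> lam \<longleftrightarrow>
     (0 < \<beta> \<and> \<beta> < 1 \<longrightarrow> lam > 0) \<and>
     (\<beta> = 1 \<longrightarrow> lam \<ge> -1) \<and>
     (\<beta> > 1 \<longrightarrow> lam \<noteq> 0)"

definition tau :: "real \<Rightarrow> real" where
  "tau \<beta> = (if \<beta> < 1 then (\<beta> + 2) / (\<beta> + 1) else 3 / 2)"

definition k0 :: "real \<Rightarrow> real \<Rightarrow> real \<Rightarrow> real \<Rightarrow> real" where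
  "k0 a \<beta> lam \<delta> = 1 / (2 * a) * ln (1 / (2 * \<delta>\<^sup>2 + lam * \<delta> powr (\<beta> + 1)))"

definition supp :: "(real \<times> real \<Rightarrow> real) \<Rightarrow> (real \<times> real) set" where
  "supp \<rho> = closure {p. \<rho> p \<noteq> 0}"

text \<open>The class P relative to the half plane M = {(x,y). x > a}.\<close>
definition classP :: "real \<Rightarrow> (real \<times> real \<Rightarrow> real) \<Rightarrow> bool" where
  "classP a \<rho> \<longleftrightarrow>
     \<rho> \<in> borel_measurable lborel \<and>
     integrable lborel (\<lambda>p. (\<rho> p)\<^sup>2) \<and>
     (\<exists>C. AE p in lborel. \<bar>\<rho> p\<bar> \<le> C) \<and>
     compact (supp \<rho>) \<and> supp \<rho> \<subseteq> {p. fst p > a} \<and>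
     0 < emeasure lborel (supp \<rho>) \<and> emeasure lborel (supp \<rho>) < \<infinity> \<and>
     integrable lborel \<rho> \<and> integral\<^sup>L lborel \<rho> = 0"

definition d0 :: "(real \<times> real \<Rightarrow> real) \<Rightarrow> real" where
  "d0 \<rho> = Inf (fst ` supp \<rho>)"

definition d1 :: "(real \<times> real \<Rightarrow> real) \<Rightarrow> real" where
  "d1 \<rho> = Sup (fst ` supp \<rho>)"

definition L2norm_sq :: "(real \<times> real \<Rightarrow> real) \<Rightarrow> real" where
  "L2norm_sq \<rho> = integral\<^sup>L lborel (\<lambda>p. (\<rho> p)\<^sup>2)"

definition C5 :: "(real \<times> real \<Rightarrow> real) \<Rightarrow> real" where
  "C5 \<rho> = (d1 \<rho> - d0 \<rho>) * L2norm_sq \<rho> / (9 * pi)"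

definition T4 :: "real \<Rightarrow> real \<Rightarrow> real \<Rightarrow> real \<Rightarrow> (real \<times> real \<Rightarrow> real) \<Rightarrow> real \<Rightarrow> real" where
  "T4 a \<beta> lam \<xi> \<rho> \<delta> =
     9 * C5 \<rho> * \<delta> powr (-1/2) * (2 * \<delta> + lam * \<delta> powr \<beta>) powr (-3/2)
       * (lam\<^sup>2 * \<delta> powr (2 * \<beta>) + 4)
       * (LBINT k:{k0 a \<beta> lam \<delta>..}.
            exp (-2 * k * (d0 \<rho> - 3/2 * a)) * exp (-4 * k * a) * ((exp (2 * k * \<xi>) - 1) / k))"

end

theory Submission
  imports Defs
begin

lemma ev_nonneg: "eventually (\<lambda>x::real. 0 \<le> x) (at_right 0)"
  using eventually_at_right_less[of "0::real"] by eventually_elim simp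

lemma exp_tail:
  fixes c x0 :: real
  assumes "c > 0"
  shows "set_integrable lborel {x0..} (\<lambda>x. exp(-c*x))"
    and "(LBINT x:{x0..}. exp(-c*x)) = exp(-c*x0)/c"
proof -
  have "(\<lambda>x. exp(-c*x)) absolutely_integrable_on {x0..}"
    using assms by (intro nonnegative_absolutely_integrable_1 integrable_on_exp_minus_to_infinity) auto
  moreover have m: "(\<lambda>x. indicat_real {x0..} x *\<^sub>R exp(-c*x)) \<in> borel_measurable lborel"
    unfolding measurable_lborel2 by (intro borel_measurable_continuous_on_indicator) (auto intro!: continuous_intros)
  ultimately show si: "set_integrable lborel {x0..} (\<lambda>x. exp(-c*x))"
    unfolding set_integrable_def using integrable_completion[OF m] by simp
  show "(LBINT x:{x0..}. exp(-c*x)) = exp(-c*x0)/c"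
    using set_borel_integral_eq_integral(2)[OF si] has_integral_exp_minus_to_infinity[OF assms, of x0]
    by (simp add: integral_unique)
qed


lemma int_bound:
  fixes a d \<xi> k0 c :: real
  assumes k0: "k0 > 0" and xi: "\<xi> > 0" and c: "c > 0" and cdef: "c = 2*d + a - 2*\<xi>"
  shows "0 \<le> (LBINT k:{k0..}. exp (-2 * k * (d - 3/2 * a)) * exp (-4 * k * a) * ((exp (2 * k * \<xi>) - 1) / k))"
    and "(LBINT k:{k0..}. exp (-2 * k * (d - 3/2 * a)) * exp (-4 * k * a) * ((exp (2 * k * \<xi>) - 1) / k))
          \<le> 2*\<xi>*exp(-c*k0)/c"
proof -
  define f where "f = (\<lambda>k::real. exp (-2 * k * (d - 3/2 * a)) * exp (-4 * k * a) * ((exp (2 * k * \<xi>) - 1) / k))"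
  have fnn: "0 \<le> f k" if "k > 0" for k
  proof -
    have "exp (2*k*\<xi>) \<ge> 1" using that xi by simp
    then show ?thesis using that unfolding f_def by (intro mult_nonneg_nonneg divide_nonneg_pos) auto
  qed
  have fle: "f k \<le> 2*\<xi>*exp(-c*k)" if "k > 0" for k
  proof -
    have e1: "1 - 2*k*\<xi> \<le> exp (-(2*k*\<xi>))" using exp_ge_add_one_self[of "-(2*k*\<xi>)"] by simp
    have "exp (2*k*\<xi>) * (1 - 2*k*\<xi>) \<le> exp (2*k*\<xi>) * exp (-(2*k*\<xi>))"
      by (rule mult_left_mono[OF e1]) simp
    also have "\<dots> = 1" by (simp add: exp_minus field_simps)
    finally have "exp (2*k*\<xi>) - 1 \<le> 2*k*\<xi> * exp (2*k*\<xi>)" by (simp add: algebra_simps)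
    hence q: "(exp (2*k*\<xi>) - 1)/k \<le> 2*\<xi> * exp (2*k*\<xi>)" using that by (simp add: divide_simps mult_ac)
    have "f k \<le> exp (-2 * k * (d - 3/2 * a)) * exp (-4 * k * a) * (2*\<xi> * exp (2*k*\<xi>))"
      unfolding f_def by (rule mult_left_mono[OF q]) simp
    also have "\<dots> = 2*\<xi>*exp(-2 * k * (d - 3/2 * a) + -4 * k * a + 2*k*\<xi>)"
      by (simp only: exp_add) (simp add: mult_ac)
    also have "-2 * k * (d - 3/2 * a) + -4 * k * a + 2*k*\<xi> = -c*k" by (simp add: cdef algebra_simps)
    finally show ?thesis .
  qed
  show "0 \<le> (LBINT k:{k0..}. exp (-2 * k * (d - 3/2 * a)) * exp (-4 * k * a) * ((exp (2 * k * \<xi>) - 1) / k))"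
    unfolding set_lebesgue_integral_def
    by (rule integral_nonneg_AE, rule AE_I2) (use fnn[unfolded f_def] k0 in \<open>auto simp: indicator_def\<close>)
  have I: "integrable lborel (\<lambda>k. 2*\<xi> * (indicat_real {k0..} k *\<^sub>R exp(-c*k)))"
    using exp_tail(1)[OF c, of k0] unfolding set_integrable_def by (rule integrable_mult_right)
  have "(LBINT k:{k0..}. f k) \<le> integral\<^sup>L lborel (\<lambda>k. 2*\<xi> * (indicat_real {k0..} k *\<^sub>R exp(-c*k)))"
    unfolding set_lebesgue_integral_def
  proof (rule integral_mono'[OF I])
    fix k :: real
    show "indicat_real {k0..} k *\<^sub>R f k \<le> 2*\<xi> * (indicat_real {k0..} k *\<^sub>R exp(-c*k))"
      using fle[of k] k0 by (auto simp: indicator_def)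
    show "0 \<le> 2*\<xi> * (indicat_real {k0..} k *\<^sub>R exp(-c*k))" using xi by (auto simp: indicator_def)
  qed
  also have "\<dots> = 2*\<xi> * (LBINT k:{k0..}. exp(-c*k))"
    unfolding set_lebesgue_integral_def by simp
  also have "\<dots> = 2*\<xi>*exp(-c*k0)/c" using exp_tail(2)[OF c, of k0] by simp
  finally show "(LBINT k:{k0..}. exp (-2 * k * (d - 3/2 * a)) * exp (-4 * k * a) * ((exp (2 * k * \<xi>) - 1) / k))
          \<le> 2*\<xi>*exp(-c*k0)/c" unfolding f_def .
qed


theorem lemma5p5:
  fixes a \<beta> lam \<xi> :: real and \<rho> :: "real \<times> real \<Rightarrow> real"
  assumes "a > 0" and "\<beta> > 0" and "feasible \<beta> lam"
    and "0 < \<xi>" and "\<xi> < a"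
    and "classP a \<rho>"
    and "d0 \<rho> \<ge> tau \<beta> * a"
  shows "(T4 a \<beta> lam \<xi> \<rho> \<longlongrightarrow> 0) (at_right 0)"
proof -
  note apos = assms(1) and bpos = assms(2) and feas = assms(3) and xi = assms(4) and xia = assms(5)
  define d where "d = d0 \<rho>"
  define c where "c = 2*d + a - 2*\<xi>"
  define p where "p = c/(2*a)"
  define m where "m = (if \<beta> < 1 then \<beta> else 1)"
  define w where "w = (\<lambda>\<delta>::real. if \<beta> < 1 then 2*\<delta> powr (1-\<beta>) + lam else 2 + lam*\<delta> powr (\<beta>-1))"
  define L where "L = (if \<beta> < 1 then lam else if \<beta> = 1 then 2+lam else 2)"
  define e where "e = (1+m)*p - 1/2 - 3*m/2"
  define K where "K = 9*\<bar>C5 \<rho>\<bar>*2*\<xi>/c"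
  have tau: "tau \<beta> \<ge> 3/2" using bpos by (auto simp: tau_def field_simps)
  have dge: "d \<ge> tau \<beta> * a" using assms(7) by (simp add: d_def)
  have d32: "d \<ge> 3/2*a" using dge tau apos by (meson mult_right_mono order_trans less_imp_le)
  have cpos: "c > 0" using d32 xia apos by (simp add: c_def)
  have pgt: "p > tau \<beta> - 1/2"
  proof -
    have "p = d/a + 1/2 - \<xi>/a" using apos by (simp add: p_def c_def field_simps)
    moreover have "d/a \<ge> tau \<beta>" using dge apos by (simp add: field_simps)
    moreover have "\<xi>/a < 1" using xia apos by simp
    ultimately show ?thesis by linarith
  qed
  have mpos: "m > 0" using bpos by (simp add: m_def)
  have epos: "e > 0"
  proof (cases "\<beta> < 1")
    case True
    have t: "tau \<beta> - 1/2 = (\<beta>+3)/(2*(\<beta>+1))" using True bpos by (simp add: tau_def field_simps)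
    have "(1+\<beta>)*p > (1+\<beta>)*((\<beta>+3)/(2*(\<beta>+1)))" using pgt t bpos by (intro mult_strict_left_mono) auto
    also have "(1+\<beta>)*((\<beta>+3)/(2*(\<beta>+1))) = (\<beta>+3)/2" using bpos by (simp add: field_simps)
    finally show ?thesis using True by (simp add: e_def m_def)
  next
    case False
    then show ?thesis using pgt by (simp add: e_def m_def tau_def)
  qed
  have Lpos: "L > 0" using feas bpos by (auto simp: L_def feasible_def)
  have wlim: "(w \<longlongrightarrow> L) (at_right 0)"
  proof (cases "\<beta> < 1")
    case True
    have "((\<lambda>\<delta>::real. 2*\<delta> powr (1-\<beta>) + lam) \<longlongrightarrow> 2*0+lam) (at_right 0)"
      using True by (intro tendsto_intros tendsto_zero_powrI) (auto simp: ev_nonneg)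
    then show ?thesis using True by (simp add: w_def L_def)
  next
    case False
    show ?thesis
    proof (cases "\<beta> = 1")
      case True
      have "eventually (\<lambda>\<delta>::real. 2+lam = w \<delta>) (at_right 0)"
        using eventually_at_right_less[of "0::real"] by eventually_elim (simp add: w_def True)
      then have "(w \<longlongrightarrow> 2+lam) (at_right 0)" by (rule Lim_transform_eventually[OF tendsto_const])
      then show ?thesis using True by (simp add: L_def)
    next
      case F2: False
      have "((\<lambda>\<delta>::real. 2 + lam*\<delta> powr (\<beta>-1)) \<longlongrightarrow> 2+lam*0) (at_right 0)"
        using False F2 by (intro tendsto_intros tendsto_zero_powrI) (auto simp: ev_nonneg)
      then show ?thesis using False F2 by (simp add: w_def L_def)
    qed
  qed
  have u_eq: "2*\<delta> + lam*\<delta> powr \<beta> = \<delta> powr m * w \<delta>" if "\<delta> > 0" for \<delta> :: real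
  proof (cases "\<beta> < 1")
    case True
    have "\<delta> powr \<beta> * \<delta> powr (1-\<beta>) = \<delta>" using that by (simp add: powr_add[symmetric])
    then show ?thesis using True by (simp add: m_def w_def algebra_simps)
  next
    case False
    have "\<delta> powr \<beta> = \<delta> powr (1 + (\<beta>-1))" by simp
    also have "\<dots> = \<delta> powr 1 * \<delta> powr (\<beta>-1)" by (rule powr_add)
    finally have "\<delta> * \<delta> powr (\<beta>-1) = \<delta> powr \<beta>" using that by simp
    then show ?thesis using False that by (simp add: m_def w_def algebra_simps)
  qed
  have s_eq: "2*\<delta>\<^sup>2 + lam*\<delta> powr (\<beta>+1) = \<delta> powr (1+m) * w \<delta>" if "\<delta> > 0" for \<delta> :: real
  proof -
    have "2*\<delta>\<^sup>2 + lam*\<delta> powr (\<beta>+1) = \<delta> * (2*\<delta> + lam*\<delta> powr \<beta>)"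
      using that by (simp add: powr_add power2_eq_square algebra_simps)
    also have "\<dots> = \<delta> powr (1+m) * w \<delta>" using u_eq[OF that] that by (simp add: powr_add)
    finally show ?thesis .
  qed
  have slim: "((\<lambda>\<delta>. \<delta> powr (1+m) * w \<delta>) \<longlongrightarrow> 0 * L) (at_right 0)"
    using tendsto_mult[OF tendsto_zero_powrI[OF tendsto_ident_at tendsto_const ev_nonneg] wlim] mpos by simp
  have ev: "eventually (\<lambda>\<delta>. 0 < \<delta> \<and> w \<delta> > 0 \<and> \<delta> powr (1+m) * w \<delta> < 1) (at_right 0)"
  proof -
    have "eventually (\<lambda>\<delta>. w \<delta> > 0) (at_right 0)" using order_tendstoD(1)[OF wlim Lpos] .
    moreover have "eventually (\<lambda>\<delta>. \<delta> powr (1+m) * w \<delta> < 1) (at_right 0)"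
      using order_tendstoD(2)[OF slim] by simp
    moreover have "eventually (\<lambda>\<delta>::real. 0 < \<delta>) (at_right 0)" by (simp add: eventually_at_right_less)
    ultimately show ?thesis by eventually_elim auto
  qed
  define g where "g = (\<lambda>\<delta>. K * (lam^2*\<delta> powr (2*\<beta>)+4) * \<delta> powr e * w \<delta> powr (p-3/2))"
  have t1: "((\<lambda>\<delta>::real. \<delta> powr e) \<longlongrightarrow> 0) (at_right 0)"
    by (rule tendsto_zero_powrI[OF tendsto_ident_at tendsto_const ev_nonneg epos])
  have t2: "((\<lambda>\<delta>::real. \<delta> powr (2*\<beta>)) \<longlongrightarrow> 0) (at_right 0)"
    by (rule tendsto_zero_powrI[OF tendsto_ident_at tendsto_const ev_nonneg]) (use bpos in simp)
  have t3: "((\<lambda>\<delta>. w \<delta> powr (p-3/2)) \<longlongrightarrow> L powr (p-3/2)) (at_right 0)"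
    by (rule tendsto_powr[OF wlim tendsto_const]) (use Lpos in simp)
  have "(g \<longlongrightarrow> K * (lam^2*0+4) * 0 * L powr (p-3/2)) (at_right 0)"
    unfolding g_def
    by (rule tendsto_mult[OF tendsto_mult[OF tendsto_mult[OF tendsto_const tendsto_add[OF tendsto_mult[OF tendsto_const t2] tendsto_const]] t1] t3])
  hence glim: "(g \<longlongrightarrow> 0) (at_right 0)" by simp
  have bound: "eventually (\<lambda>\<delta>. norm (T4 a \<beta> lam \<xi> \<rho> \<delta>) \<le> g \<delta>) (at_right 0)"
    using ev
  proof eventually_elim
    case (elim \<delta>)
    hence dp: "\<delta> > 0" and wp: "w \<delta> > 0" and s1: "\<delta> powr (1+m) * w \<delta> < 1" by auto
    define s where "s = \<delta> powr (1+m) * w \<delta>"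
    have sp: "s > 0" using dp wp by (simp add: s_def)
    have k0eq: "k0 a \<beta> lam \<delta> = 1/(2*a) * ln (1/s)" using s_eq[OF dp] by (simp add: k0_def s_def)
    have "1/s > 1" using s1 sp by (simp add: s_def field_simps)
    hence "ln (1/s) > 0" by (rule ln_gt_zero)
    hence k0p: "k0 a \<beta> lam \<delta> > 0" using k0eq apos by simp
    define I where "I = (LBINT k:{k0 a \<beta> lam \<delta>..}. exp (-2 * k * (d0 \<rho> - 3/2 * a)) * exp (-4 * k * a) * ((exp (2 * k * \<xi>) - 1) / k))"
    have I0: "0 \<le> I" unfolding I_def by (rule int_bound(1)[OF k0p xi cpos c_def[unfolded d_def]])
    have I1: "I \<le> 2*\<xi>*exp(-c*k0 a \<beta> lam \<delta>)/c" unfolding I_def by (rule int_bound(2)[OF k0p xi cpos c_def[unfolded d_def]])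
    have "-c*k0 a \<beta> lam \<delta> = p * ln s" using sp apos by (simp add: k0eq p_def ln_div)
    hence expeq: "exp(-c*k0 a \<beta> lam \<delta>) = s powr p" using sp by (simp add: powr_def)
    define Q where "Q = lam^2*\<delta> powr (2*\<beta>)+4"
    have Qp: "Q > 0" unfolding Q_def by (simp add: add_nonneg_pos)
    define A where "A = \<delta> powr (-1/2) * (\<delta> powr m * w \<delta>) powr (-3/2)"
    have Ap: "A \<ge> 0" by (simp add: A_def)
    have T4eq: "T4 a \<beta> lam \<xi> \<rho> \<delta> = 9 * C5 \<rho> * (A * Q) * I"
      unfolding T4_def I_def A_def Q_def u_eq[OF dp] by (simp add: mult_ac)
    have "norm (T4 a \<beta> lam \<xi> \<rho> \<delta>) = 9 * \<bar>C5 \<rho>\<bar> * (A*Q) * I"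
      using T4eq Ap Qp I0 by (simp add: abs_mult)
    also have "\<dots> \<le> 9 * \<bar>C5 \<rho>\<bar> * (A*Q) * (2*\<xi>*(s powr p)/c)"
      using I1 expeq Ap Qp by (intro mult_left_mono) auto
    also have "\<dots> = K * Q * (A * s powr p)" by (simp add: K_def)
    also have "A * s powr p = \<delta> powr e * w \<delta> powr (p-3/2)"
    proof -
      have "A * s powr p = \<delta> powr (-1/2) * (\<delta> powr (m*(-3/2)) * w \<delta> powr (-3/2)) * (\<delta> powr ((1+m)*p) * w \<delta> powr p)"
        unfolding A_def s_def using dp wp by (simp add: powr_mult powr_powr)
      also have "\<dots> = (\<delta> powr (-1/2) * \<delta> powr (m*(-3/2)) * \<delta> powr ((1+m)*p)) * (w \<delta> powr (-3/2) * w \<delta> powr p)"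
        by (simp add: mult_ac)
      also have "\<dots> = \<delta> powr e * w \<delta> powr (p-3/2)"
        by (simp add: powr_add[symmetric] e_def algebra_simps)
      finally show ?thesis .
    qed
    finally show ?case by (simp add: g_def Q_def)
  qed
  show ?thesis using Lim_null_comparison[OF bound glim] .
qed

end
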